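(* For the empty configuration (no points, lines or curves) there exists an admissible set $\Sigma\subset\mathbb R^2$ such that no two lines, each passing through two distinct points of $\Sigma$, are perpendicular. In particular, a pair of perpendicular lines cannot be constructed using only a straightedge.
   Context: A configuration is a finite collection of points $a_i\in\mathbb R^2$, lines $\ell_i\subset\mathbb R^2$ and curves $\gamma_i\subset\mathbb R^2$. Given a configuration $\{a_i,\ell_i,\gamma_i\}$, call a set $\Sigma\subset\mathbb R^2$ admissible if: (1) $\Sigma$ is dense in $\mathbb R^2$; (2) every $a_i$ lies in $\Sigma$; (3) for any $b_1,b_2,b_3,b_4\in\Sigma$ with $b_1\neq b_2$, $b_3\ne b_4$, if the lines $b_1b_2$ and $b_3b_4$ are distinct and not parallel, then their intersection point lies in $\Sigma$; (4) for any distinct $b_1,b_2\in\Sigma$, every isolated intersection point of the line $b_1b_2$ with any of the lines $\ell_i$ or curves $\gamma_j$ lies in $\Sigma$. For the empty configuration, conditions (2) and (4) are vacuous. *)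

theory Defs
  imports "HOL-Analysis.Analysis"
begin

type_synonym pt = "real \<times> real"

text \<open>The line through two points b1, b2 (meant for b1 \<noteq> b2).\<close>
definition line_through :: "pt \<Rightarrow> pt \<Rightarrow> pt set" where
  "line_through b1 b2 = {p. \<exists>t::real. p = b1 + t *\<^sub>R (b2 - b1)}"

definition cross2 :: "pt \<Rightarrow> pt \<Rightarrow> real" where
  "cross2 u v = fst u * snd v - snd u * fst v"

definition lines_parallel :: "pt \<Rightarrow> pt \<Rightarrow> pt \<Rightarrow> pt \<Rightarrow> bool" where
  "lines_parallel b1 b2 b3 b4 \<longleftrightarrow> cross2 (b2 - b1) (b4 - b3) = 0"

definition isolated_pt_of :: "pt \<Rightarrow> pt set \<Rightarrow> bool" where
  "isolated_pt_of p S \<longleftrightarrow> p \<in> S \<and> (\<exists>e>0. S \<inter> ball p e = {p})"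

definition admissible :: "pt set \<Rightarrow> pt set set \<Rightarrow> pt set set \<Rightarrow> pt set \<Rightarrow> bool" where
  "admissible A Ls Cs \<Sigma> \<longleftrightarrow>
     closure \<Sigma> = UNIV \<and>
     A \<subseteq> \<Sigma> \<and>
     (\<forall>b1\<in>\<Sigma>. \<forall>b2\<in>\<Sigma>. \<forall>b3\<in>\<Sigma>. \<forall>b4\<in>\<Sigma>.
        b1 \<noteq> b2 \<and> b3 \<noteq> b4 \<and> line_through b1 b2 \<noteq> line_through b3 b4
        \<and> \<not> lines_parallel b1 b2 b3 b4 \<longrightarrow>
        (\<forall>p. p \<in> line_through b1 b2 \<inter> line_through b3 b4 \<longrightarrow> p \<in> \<Sigma>)) \<and>
     (\<forall>b1\<in>\<Sigma>. \<forall>b2\<in>\<Sigma>. b1 \<noteq> b2 \<longrightarrow>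
        (\<forall>G \<in> Ls \<union> Cs. \<forall>p. isolated_pt_of p (line_through b1 b2 \<inter> G) \<longrightarrow> p \<in> \<Sigma>))"

end

theory Submission
  imports Defs "HOL-Computational_Algebra.Primes"
begin

lemma sqrt_prime_irr:
  fixes p :: nat
  assumes "prime p"
  shows "sqrt p \<notin> \<rat>"
proof
  from \<open>prime p\<close> have p: "p > 1" by (rule prime_gt_1_nat)
  assume "sqrt p \<in> \<rat>"
  then obtain m n :: nat
    where n: "n \<noteq> 0"
      and sqrt_rat: "\<bar>sqrt p\<bar> = m / n"
      and "coprime m n" by (rule Rats_abs_nat_div_natE)
  have eq: "m\<^sup>2 = p * n\<^sup>2"
  proof -
    from n and sqrt_rat have "m = \<bar>sqrt p\<bar> * n" by simp
    then have "m\<^sup>2 = (sqrt p)\<^sup>2 * n\<^sup>2" by (simp add: power_mult_distrib)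
    also have "(sqrt p)\<^sup>2 = p" by simp
    also have "\<dots> * n\<^sup>2 = p * n\<^sup>2" by simp
    finally show ?thesis by linarith
  qed
  have "p dvd m \<and> p dvd n"
  proof
    from eq have "p dvd m\<^sup>2" ..
    with \<open>prime p\<close> show "p dvd m" by (rule prime_dvd_power)
    then obtain k where "m = p * k" ..
    with eq have "p * n\<^sup>2 = p\<^sup>2 * k\<^sup>2" by algebra
    with p have "n\<^sup>2 = p * k\<^sup>2" by (simp add: power2_eq_square)
    then have "p dvd n\<^sup>2" ..
    with \<open>prime p\<close> show "p dvd n" by (rule prime_dvd_power)
  qed
  then have "p dvd gcd m n" by simp
  with \<open>coprime m n\<close> have "p = 1" by simp
  with p show False by simp
qed

lemma sqrt2_irr: "sqrt 2 \<notin> \<rat>"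
  using sqrt_prime_irr[of 2] by simp

lemma sqrt3_irr: "sqrt 3 \<notin> \<rat>"
  using sqrt_prime_irr[of 3] by simp

lemma no_sq3:
  fixes a c :: real
  assumes "a \<in> \<rat>" "c \<in> \<rat>" "a^2 = 3 * c^2"
  shows "a = 0 \<and> c = 0"
proof (cases "c = 0")
  case True then show ?thesis using assms by simp
next
  case False
  have "(a/c)^2 = 3" using assms False by (simp add: power_divide)
  hence "sqrt 3 = \<bar>a/c\<bar>" by (metis real_sqrt_abs)
  moreover have "\<bar>a/c\<bar> \<in> \<rat>" using assms by simp
  ultimately show ?thesis using sqrt3_irr by simp
qed

lemma irr_comb:
  fixes u v :: real
  assumes "u \<in> \<rat>" "v \<in> \<rat>" "u + sqrt 2 * v = 0"
  shows "u = 0 \<and> v = 0"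
proof (cases "v = 0")
  case True then show ?thesis using assms by simp
next
  case False
  hence "sqrt 2 = - u / v" using assms(3) by (simp add: field_simps)
  moreover have "- u / v \<in> \<rat>" using assms by simp
  ultimately show ?thesis using sqrt2_irr by simp
qed

definition Sig :: "pt set" where
  "Sig = {z. snd z \<in> \<rat> \<and> fst z - sqrt 2 * snd z \<in> \<rat>}"

lemma Sig_dense: "closure Sig = UNIV"
proof -
  have "z \<in> closure Sig" for z :: pt
  proof (unfold closure_approachable, intro allI impI)
    fix e :: real assume e: "e > 0"
    obtain x y where z: "z = (x, y)" by (cases z)
    define d where "d = e / 8"
    have d: "d > 0" using e by (simp add: d_def)
    obtain y' where y': "y' \<in> \<rat>" "y - d < y'" "y' < y + d"
      using Rats_dense_in_real[of "y - d" "y + d"] d by auto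
    obtain r' where r': "r' \<in> \<rat>" "x - sqrt 2 * y - d < r'" "r' < x - sqrt 2 * y + d"
      using Rats_dense_in_real[of "x - sqrt 2 * y - d" "x - sqrt 2 * y + d"] d by auto
    let ?w = "(r' + sqrt 2 * y', y')"
    have "?w \<in> Sig" using y' r' by (simp add: Sig_def)
    moreover have "dist ?w z < e"
    proof -
      have s2: "sqrt 2 < 2" by (simp add: real_sqrt_less_iff[of 2 4, simplified] )
      have hy: "\<bar>y' - y\<bar> < d" using y' by auto
      have hr: "\<bar>r' - (x - sqrt 2 * y)\<bar> < d" using r' by auto
      have "r' + sqrt 2 * y' - x = (r' - (x - sqrt 2 * y)) + sqrt 2 * (y' - y)"
        by (simp add: algebra_simps)
      hence "\<bar>r' + sqrt 2 * y' - x\<bar> \<le> \<bar>r' - (x - sqrt 2 * y)\<bar> + \<bar>sqrt 2 * (y' - y)\<bar>"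
        by (metis abs_triangle_ineq)
      also have "\<dots> = \<bar>r' - (x - sqrt 2 * y)\<bar> + sqrt 2 * \<bar>y' - y\<bar>" by (simp add: abs_mult)
      also have "\<dots> \<le> d + 2 * d"
      proof -
        have "sqrt 2 * \<bar>y' - y\<bar> \<le> 2 * \<bar>y' - y\<bar>"
          using s2 by (intro mult_right_mono) auto
        moreover have "2 * \<bar>y' - y\<bar> \<le> 2 * d" using hy by simp
        ultimately have "sqrt 2 * \<bar>y' - y\<bar> \<le> 2 * d" by (rule order_trans)
        thus ?thesis using hr by (intro add_mono) auto
      qed
      finally have hx: "\<bar>r' + sqrt 2 * y' - x\<bar> \<le> 3 * d" by simp
      have "dist ?w z = sqrt ((r' + sqrt 2 * y' - x)^2 + (y' - y)^2)"
        by (simp add: z dist_Pair_Pair dist_real_def)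
      also have "\<dots> \<le> \<bar>r' + sqrt 2 * y' - x\<bar> + \<bar>y' - y\<bar>"
        by (rule sqrt_sum_squares_le_sum_abs)
      also have "\<dots> < e" using hx hy d by (simp add: d_def)
      finally show ?thesis .
    qed
    ultimately show "\<exists>w\<in>Sig. dist w z < e" by blast
  qed
  thus ?thesis by auto
qed

lemma Sig_inter:
  assumes b1: "b1 \<in> Sig" and b2: "b2 \<in> Sig" and b3: "b3 \<in> Sig" and b4: "b4 \<in> Sig"
    and np: "\<not> lines_parallel b1 b2 b3 b4"
    and p1: "p \<in> line_through b1 b2" and p2: "p \<in> line_through b3 b4"
  shows "p \<in> Sig"
proof -
  obtain x1 y1 where e1: "b1 = (x1, y1)" by (cases b1)
  obtain x2 y2 where e2: "b2 = (x2, y2)" by (cases b2)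
  obtain x3 y3 where e3: "b3 = (x3, y3)" by (cases b3)
  obtain x4 y4 where e4: "b4 = (x4, y4)" by (cases b4)
  obtain px py where ep: "p = (px, py)" by (cases p)
  obtain t where t: "px = x1 + t * (x2 - x1)" "py = y1 + t * (y2 - y1)"
    using p1 by (auto simp: line_through_def e1 e2 ep)
  obtain s where s: "px = x3 + s * (x4 - x3)" "py = y3 + s * (y4 - y3)"
    using p2 by (auto simp: line_through_def e3 e4 ep)
  define D where "D = (x2 - x1) * (y4 - y3) - (y2 - y1) * (x4 - x3)"
  have D: "D \<noteq> 0" using np by (simp add: lines_parallel_def cross2_def e1 e2 e3 e4 D_def)
  define r1 where "r1 = x1 - sqrt 2 * y1"
  define r2 where "r2 = x2 - sqrt 2 * y2"
  define r3 where "r3 = x3 - sqrt 2 * y3"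
  define r4 where "r4 = x4 - sqrt 2 * y4"
  have R: "r1 \<in> \<rat>" "r2 \<in> \<rat>" "r3 \<in> \<rat>" "r4 \<in> \<rat>" "y1 \<in> \<rat>" "y2 \<in> \<rat>" "y3 \<in> \<rat>" "y4 \<in> \<rat>"
    using b1 b2 b3 b4 by (auto simp: Sig_def e1 e2 e3 e4 r1_def r2_def r3_def r4_def)
  have xs: "x1 = r1 + sqrt 2 * y1" "x2 = r2 + sqrt 2 * y2" "x3 = r3 + sqrt 2 * y3" "x4 = r4 + sqrt 2 * y4"
    by (simp_all add: r1_def r2_def r3_def r4_def)
  have tD: "t * D = (x3 - x1) * (y4 - y3) - (y3 - y1) * (x4 - x3)"
  proof -
    have hx: "x3 - x1 = t * (x2 - x1) - s * (x4 - x3)" using t s by linarith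
    have hy: "y3 - y1 = t * (y2 - y1) - s * (y4 - y3)" using t s by linarith
    show ?thesis unfolding hx hy D_def by algebra
  qed
  have D': "D = (r2 - r1) * (y4 - y3) - (y2 - y1) * (r4 - r3)"
    unfolding D_def xs by algebra
  have N': "(x3 - x1) * (y4 - y3) - (y3 - y1) * (x4 - x3) = (r3 - r1) * (y4 - y3) - (y3 - y1) * (r4 - r3)"
    unfolding xs by algebra
  have "t = ((r3 - r1) * (y4 - y3) - (y3 - y1) * (r4 - r3)) / ((r2 - r1) * (y4 - y3) - (y2 - y1) * (r4 - r3))"
    using tD D D' N' by (simp add: field_simps)
  hence tQ: "t \<in> \<rat>" using R by simp
  have "py \<in> \<rat>" using t(2) tQ R by simp
  moreover have "px - sqrt 2 * py = r1 + t * (r2 - r1)"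
    using t unfolding xs by algebra
  hence "px - sqrt 2 * py \<in> \<rat>" using tQ R by simp
  ultimately show ?thesis by (simp add: Sig_def ep)
qed

lemma Sig_noperp:
  assumes b1: "b1 \<in> Sig" and b2: "b2 \<in> Sig" and b3: "b3 \<in> Sig" and b4: "b4 \<in> Sig"
    and n1: "b1 \<noteq> b2" and n2: "b3 \<noteq> b4"
  shows "inner (b2 - b1) (b4 - b3) \<noteq> 0"
proof
  assume h: "inner (b2 - b1) (b4 - b3) = 0"
  obtain x1 y1 where e1: "b1 = (x1, y1)" by (cases b1)
  obtain x2 y2 where e2: "b2 = (x2, y2)" by (cases b2)
  obtain x3 y3 where e3: "b3 = (x3, y3)" by (cases b3)
  obtain x4 y4 where e4: "b4 = (x4, y4)" by (cases b4)
  define a1 where "a1 = (x2 - sqrt 2 * y2) - (x1 - sqrt 2 * y1)"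
  define a2 where "a2 = (x4 - sqrt 2 * y4) - (x3 - sqrt 2 * y3)"
  define c1 where "c1 = y2 - y1"
  define c2 where "c2 = y4 - y3"
  have Q: "a1 \<in> \<rat>" "a2 \<in> \<rat>" "c1 \<in> \<rat>" "c2 \<in> \<rat>"
    using b1 b2 b3 b4 by (auto simp: Sig_def e1 e2 e3 e4 a1_def a2_def c1_def c2_def)
  have nz1: "a1 \<noteq> 0 \<or> c1 \<noteq> 0" using n1 by (auto simp: e1 e2 a1_def c1_def)
  have nz2: "a2 \<noteq> 0 \<or> c2 \<noteq> 0" using n2 by (auto simp: e3 e4 a2_def c2_def)
  have dx1: "x2 - x1 = a1 + sqrt 2 * c1" by (simp add: a1_def c1_def algebra_simps)
  have dx2: "x4 - x3 = a2 + sqrt 2 * c2" by (simp add: a2_def c2_def algebra_simps)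
  have "inner (b2 - b1) (b4 - b3) = (x2 - x1) * (x4 - x3) + (y2 - y1) * (y4 - y3)"
    by (simp add: e1 e2 e3 e4 inner_prod_def)
  also have "\<dots> = (a1 * a2 + 3 * c1 * c2) + sqrt 2 * (a1 * c2 + c1 * a2)"
  proof -
    have sq: "sqrt 2 * sqrt 2 = (2::real)" by simp
    have "(a1 + sqrt 2 * c1) * (a2 + sqrt 2 * c2) + c1 * c2 = a1 * a2 + (sqrt 2 * sqrt 2) * c1 * c2 + c1 * c2 + sqrt 2 * (a1 * c2 + c1 * a2)"
      by algebra
    thus ?thesis unfolding dx1 dx2 c1_def[symmetric] c2_def[symmetric] sq
      by simp
  qed
  finally have "(a1 * a2 + 3 * c1 * c2) + sqrt 2 * (a1 * c2 + c1 * a2) = 0" using h by simp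
  hence E: "a1 * a2 + 3 * c1 * c2 = 0" "a1 * c2 + c1 * a2 = 0"
    using irr_comb[of "a1 * a2 + 3 * c1 * c2" "a1 * c2 + c1 * a2"] Q by auto
  have "a2 * (a1^2 - 3 * c1^2) = a1 * (a1 * a2 + 3 * c1 * c2) - 3 * c1 * (a1 * c2 + c1 * a2)"
    by (simp add: algebra_simps power2_eq_square)
  hence "a2 * (a1^2 - 3 * c1^2) = 0" using E by simp
  hence "a2 = 0 \<or> a1^2 - 3 * c1^2 = 0" by simp
  thus False
  proof
    assume "a2 = 0"
    hence "c2 \<noteq> 0" using nz2 by simp
    thus False using E \<open>a2 = 0\<close> nz1 by simp
  next
    assume "a1^2 - 3 * c1^2 = 0"
    thus False using no_sq3[of a1 c1] Q nz1 by simp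
  qed
qed

theorem mainTheorem7:
  shows "\<exists>\<Sigma>. admissible {} {} {} \<Sigma> \<and>
           (\<forall>b1\<in>\<Sigma>. \<forall>b2\<in>\<Sigma>. \<forall>b3\<in>\<Sigma>. \<forall>b4\<in>\<Sigma>.
              b1 \<noteq> b2 \<and> b3 \<noteq> b4 \<longrightarrow> inner (b2 - b1) (b4 - b3) \<noteq> 0)"
proof (intro exI[of _ Sig] conjI)
  show "admissible {} {} {} Sig"
    unfolding admissible_def
  proof (intro conjI)
    show "closure Sig = UNIV" by (rule Sig_dense)
    show "{} \<subseteq> Sig" by simp
    show "\<forall>b1\<in>Sig. \<forall>b2\<in>Sig. b1 \<noteq> b2 \<longrightarrow>
        (\<forall>G \<in> {} \<union> {}. \<forall>p. isolated_pt_of p (line_through b1 b2 \<inter> G) \<longrightarrow> p \<in> Sig)" by simp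
    show "\<forall>b1\<in>Sig. \<forall>b2\<in>Sig. \<forall>b3\<in>Sig. \<forall>b4\<in>Sig.
        b1 \<noteq> b2 \<and> b3 \<noteq> b4 \<and> line_through b1 b2 \<noteq> line_through b3 b4
        \<and> \<not> lines_parallel b1 b2 b3 b4 \<longrightarrow>
        (\<forall>p. p \<in> line_through b1 b2 \<inter> line_through b3 b4 \<longrightarrow> p \<in> Sig)"
      apply (intro ballI allI impI)
      apply (elim conjE IntE)
      apply (rule Sig_inter)
      by assumption+
  qed
  show "\<forall>b1\<in>Sig. \<forall>b2\<in>Sig. \<forall>b3\<in>Sig. \<forall>b4\<in>Sig.
              b1 \<noteq> b2 \<and> b3 \<noteq> b4 \<longrightarrow> inner (b2 - b1) (b4 - b3) \<noteq> 0"
    using Sig_noperp by blast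
qed

end
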